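(* Let $\langle X\mid R\rangle$ be a side-confluent $N$-homogeneous presentation with $X$ a finite totally ordered set, and let $n\geq0$. Let $h'_n:\bigoplus_{m\geq l_N(n)}V^{\otimes m}\to T(V)$ be the linear map whose restriction to $V^{\otimes m}$ is the left bound $\varphi^{P_{n,m}}(\gamma_1)$ of $P_{n,m}$. Then the image of $h'_n$ is included in $\mathrm{im}(\phi)\otimes J_{n+1}$.
   Context: $\mathbb{K}$ is a field, $N\geq2$, $X^{(m)}$ words of length $m$, $V=\mathbb{K}X$, $V^{\otimes m}=\mathbb{K}X^{(m)}$, $T(V)$ the free algebra (tensor products of subspaces of $T(V)$ are viewed in $T(V)$ via concatenation). $R\subset V^{\otimes N}$, $\overline R=\mathrm{span}(R)$, $I(R)_j=0$ ($j<N$), $I(R)_j=\sum_{i=0}^{j-N}V^{\otimes i}\otimes\overline R\otimes V^{\otimes j-N-i}$ ($j\geq N$). $X^{(m)}$ lexicographically ordered, $\mathrm{lm}(f)$ greatest word in $f\neq0$. Conventions: leading coefficients in $R$ are $1$; a word is a normal form if it has no factor $\mathrm{lm}(f)$, $f\in R$, an element is a normal form if it is a combination of such words; the presentation is reduced. $S(\mathrm{lm}(f))=\mathrm{lm}(f)-f$ ($f\in R$), $S(w)=w$ otherwise; $\langle t,s\rangle^k=\cdots sts$ ($k$ factors, rightmost $s$); side-confluent: for each $1\leq m\leq N-1$ some $k$ gives $\langle\mathrm{id}_{V^{\otimes m}}\otimes S,S\otimes\mathrm{id}_{V^{\otimes m}}\rangle^k=\langle S\otimes\mathrm{id}_{V^{\otimes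 m}},\mathrm{id}_{V^{\otimes m}}\otimes S\rangle^k$. Then every $f$ has a unique normal form $\widehat f$ reachable by reductions; $\phi:T(V)\to T(V)$, $f\mapsto\widehat f$. $l_N(2k)=kN$, $l_N(2k+1)=kN+1$; $J_1=V$, $J_2=\overline R$, $J_n=\bigcap_{i=0}^{l_N(n)-N}V^{\otimes i}\otimes\overline R\otimes V^{\otimes l_N(n)-N-i}$ ($n\geq3$). A reduction operator relatively to $X^{(m)}$ is a linear projector $T$ of $V^{\otimes m}$ with each $T(w)$ equal to $w$ or a combination of words $<w$; the unique one with kernel $W$ is $\theta_{X^{(m)}}^{-1}(W)$. For $m\geq l_N(n)$: $F_1^{n,m}=\theta_{X^{(m)}}^{-1}(I(R)_{m-l_N(n)}\otimes V^{\otimes l_N(n)})$, $F_2^{n,m}=\mathrm{id}$ if $m<l_N(n+1)$, else $\theta_{X^{(m)}}^{-1}(V^{\otimes m-l_N(n+1)}\otimes J_{n+1})$; $P_{n,m}=(F_1^{n,m},F_2^{n,m})$, which is confluent under the hypotheses; fix $k$ with $\langle F_1^{n,m},F_2^{n,m}\rangle^k=\langle F_2^{n,m},F_1^{n,m}\rangle^k$. $\mathcal{A}_k$ is the algebra on $s_1,s_2$ with relations $s_i^2=s_i$, $\langle s_1,s_2\rangle^k=\langle s_2,s_1\rangle^k$; $\gamma_1=(1-s_2)\sum_{i\in I}\langle s_2,s_1\rangle^i$ with $I$ the odd integers in $[1,k-1]$; $\varphi^{P_{n,m}}:\mathcal{A}_k\to\mathrm{End}(V^{\otimes m})$, $s_i\mapsto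 F_i^{n,m}$. *)

theory Defs
  imports Main "HOL-Library.Function_Algebras"
begin

text \<open>Elements of T(V) are functions from words (lists over the finite totally
ordered alphabet 'x) to the field 'k; the coefficient of the word w is v w.
Sums are pointwise (Function_Algebras).\<close>

type_synonym ('x, 'k) vec = "'x list \<Rightarrow> 'k"

definition smul :: "'k::field \<Rightarrow> ('x, 'k) vec \<Rightarrow> ('x, 'k) vec" where
  "smul c v = (\<lambda>w. c * v w)"

definition wvec :: "'x list \<Rightarrow> ('x, 'k::field) vec" where
  "wvec u = (\<lambda>w. if w = u then 1 else 0)"

definition cmul :: "('x, 'k::field) vec \<Rightarrow> ('x, 'k) vec \<Rightarrow> ('x, 'k) vec" where
  "cmul a b = (\<lambda>w. \<Sum>i\<le>length w. a (take i w) * b (drop i w))"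

definition lin_span :: "('x, 'k::field) vec set \<Rightarrow> ('x, 'k) vec set" where
  "lin_span S = {v. \<exists>F c. finite F \<and> F \<subseteq> S \<and> v = (\<Sum>u\<in>F. smul (c u) u)}"

definition TV :: "('x, 'k::field) vec set" where
  "TV = {v. finite {w. v w \<noteq> 0}}"

definition Vpow :: "nat \<Rightarrow> ('x, 'k::field) vec set" where
  "Vpow m = lin_span {wvec w | w. length w = m}"

text \<open>Tensor product of subspaces viewed in T(V) via concatenation.\<close>
definition tens :: "('x, 'k::field) vec set \<Rightarrow> ('x, 'k) vec set \<Rightarrow> ('x, 'k) vec set" where
  "tens A B = lin_span {cmul a b | a b. a \<in> A \<and> b \<in> B}"

definition deg_comp :: "nat \<Rightarrow> ('x, 'k::field) vec \<Rightarrow> ('x, 'k) vec" where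
  "deg_comp m v = (\<lambda>w. if length w = m then v w else 0)"

text \<open>Lexicographic order on words (used on words of equal length).\<close>
definition wless :: "'x::linorder list \<Rightarrow> 'x list \<Rightarrow> bool" where
  "wless u w \<longleftrightarrow> (u, w) \<in> lexord {(a, b). a < b}"

definition lm :: "('x::linorder, 'k::field) vec \<Rightarrow> 'x list" where
  "lm f = (THE w. f w \<noteq> 0 \<and> (\<forall>u. f u \<noteq> 0 \<longrightarrow> u = w \<or> wless u w))"

definition Rbar :: "('x, 'k::field) vec set \<Rightarrow> ('x, 'k) vec set" where
  "Rbar R = lin_span R"

definition IR :: "nat \<Rightarrow> ('x, 'k::field) vec set \<Rightarrow> nat \<Rightarrow> ('x, 'k) vec set" where
  "IR N R j = (if j < N then {0} else
     lin_span (\<Union>i\<in>{0..j - N}. tens (tens (Vpow i) (Rbar R)) (Vpow (j - N - i))))"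

definition normal_word :: "('x::linorder, 'k::field) vec set \<Rightarrow> 'x list \<Rightarrow> bool" where
  "normal_word R w \<longleftrightarrow> (\<forall>f\<in>R. \<not> (\<exists>u v. w = u @ lm f @ v))"

definition normal_elem :: "('x::linorder, 'k::field) vec set \<Rightarrow> ('x, 'k) vec \<Rightarrow> bool" where
  "normal_elem R g \<longleftrightarrow> (\<forall>w. g w \<noteq> 0 \<longrightarrow> normal_word R w)"

definition reduced_pres :: "nat \<Rightarrow> ('x::linorder, 'k::field) vec set \<Rightarrow> bool" where
  "reduced_pres N R \<longleftrightarrow>
     R \<subseteq> Vpow N \<and>
     (\<forall>f\<in>R. f \<noteq> 0 \<and> f (lm f) = 1) \<and>
     (\<forall>f\<in>R. \<forall>g\<in>R. lm f = lm g \<longrightarrow> f = g) \<and>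
     (\<forall>f\<in>R. \<forall>w. w \<noteq> lm f \<and> f w \<noteq> 0 \<longrightarrow> normal_word R w)"

text \<open>The operator S on V^{\<otimes>N}: S(lm f) = lm f - f, S(w) = w otherwise (linear).\<close>
definition Sop :: "('x::linorder, 'k::field) vec set \<Rightarrow> ('x, 'k) vec \<Rightarrow> ('x, 'k) vec" where
  "Sop R g = g - (\<Sum>f\<in>R. smul (g (lm f)) f)"

text \<open>Tensor product A \<otimes> B of operators, acting on V^{\<otimes>(p+q)}, A on the first p letters.\<close>
definition tens_op :: "nat \<Rightarrow> nat \<Rightarrow> (('x::finite, 'k::field) vec \<Rightarrow> ('x, 'k) vec)
     \<Rightarrow> (('x, 'k) vec \<Rightarrow> ('x, 'k) vec) \<Rightarrow> ('x, 'k) vec \<Rightarrow> ('x, 'k) vec" where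
  "tens_op p q A B g = (\<Sum>w\<in>{w. length w = p + q}.
       smul (g w) (cmul (A (wvec (take p w))) (B (wvec (drop p w)))))"

text \<open>alt t s k = <t,s>^k = ... s t s (k factors, rightmost s).\<close>
fun alt :: "('a \<Rightarrow> 'a) \<Rightarrow> ('a \<Rightarrow> 'a) \<Rightarrow> nat \<Rightarrow> 'a \<Rightarrow> 'a" where
  "alt t s 0 = id"
| "alt t s (Suc k) = alt s t k \<circ> s"

definition side_confluent :: "nat \<Rightarrow> ('x::{finite,linorder}, 'k::field) vec set \<Rightarrow> bool" where
  "side_confluent N R \<longleftrightarrow>
     (\<forall>m. 1 \<le> m \<and> m \<le> N - 1 \<longrightarrow> (\<exists>k. \<forall>g\<in>Vpow (N + m).
        alt (tens_op m N id (Sop R)) (tens_op N m (Sop R) id) k g =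
        alt (tens_op N m (Sop R) id) (tens_op m N id (Sop R)) k g))"

definition reduction_step :: "('x::linorder, 'k::field) vec set \<Rightarrow> ('x, 'k) vec \<Rightarrow> ('x, 'k) vec \<Rightarrow> bool" where
  "reduction_step R g h \<longleftrightarrow> (\<exists>u f v. f \<in> R \<and>
       h = g - smul (g (u @ lm f @ v)) (cmul (cmul (wvec u) f) (wvec v)))"

definition nf :: "('x::linorder, 'k::field) vec set \<Rightarrow> ('x, 'k) vec \<Rightarrow> ('x, 'k) vec" where
  "nf R f = (THE g. normal_elem R g \<and> (reduction_step R)\<^sup>*\<^sup>* f g)"

definition lN :: "nat \<Rightarrow> nat \<Rightarrow> nat" where
  "lN N n = (if even n then (n div 2) * N else (n div 2) * N + 1)"

text \<open>J_n (n \<ge> 1; J_0 is not used and set to V^{\<otimes>0}).\<close>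
definition J :: "nat \<Rightarrow> ('x, 'k::field) vec set \<Rightarrow> nat \<Rightarrow> ('x, 'k) vec set" where
  "J N R n = (if n = 0 then Vpow 0 else if n = 1 then Vpow 1 else if n = 2 then Rbar R else
     (\<Inter>i\<in>{0..lN N n - N}. tens (tens (Vpow i) (Rbar R)) (Vpow (lN N n - N - i))))"

text \<open>Reduction operators relatively to X^{(m)}; an operator on V^{\<otimes>m} is encoded as a
map on T(V) depending only on the degree-m component.\<close>
definition red_op :: "nat \<Rightarrow> (('x::linorder, 'k::field) vec \<Rightarrow> ('x, 'k) vec) \<Rightarrow> bool" where
  "red_op m T \<longleftrightarrow>
     (\<forall>v. T v = T (deg_comp m v)) \<and>
     (\<forall>u\<in>Vpow m. \<forall>v\<in>Vpow m. \<forall>a b. T (smul a u + smul b v) = smul a (T u) + smul b (T v)) \<and>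
     (\<forall>v\<in>Vpow m. T v \<in> Vpow m \<and> T (T v) = T v) \<and>
     (\<forall>w. length w = m \<longrightarrow> T (wvec w) = wvec w \<or>
        T (wvec w) \<in> lin_span {wvec u | u. length u = m \<and> wless u w})"

definition theta_inv :: "nat \<Rightarrow> ('x::linorder, 'k::field) vec set \<Rightarrow> ('x, 'k) vec \<Rightarrow> ('x, 'k) vec" where
  "theta_inv m W = (THE T. red_op m T \<and> {v \<in> Vpow m. T v = 0} = W)"

definition F1 :: "nat \<Rightarrow> ('x::linorder, 'k::field) vec set \<Rightarrow> nat \<Rightarrow> nat \<Rightarrow> ('x, 'k) vec \<Rightarrow> ('x, 'k) vec" where
  "F1 N R n m = theta_inv m (tens (IR N R (m - lN N n)) (Vpow (lN N n)))"

definition F2 :: "nat \<Rightarrow> ('x::linorder, 'k::field) vec set \<Rightarrow> nat \<Rightarrow> nat \<Rightarrow> ('x, 'k) vec \<Rightarrow> ('x, 'k) vec" where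
  "F2 N R n m = (if m < lN N (n + 1) then id
     else theta_inv m (tens (Vpow (m - lN N (n + 1))) (J N R (n + 1))))"

definition gamma1 :: "nat \<Rightarrow> ('x::linorder, 'k::field) vec set \<Rightarrow> nat \<Rightarrow> nat \<Rightarrow> nat \<Rightarrow> ('x, 'k) vec \<Rightarrow> ('x, 'k) vec" where
  "gamma1 N R n m k g =
     (let A = (\<Sum>i\<in>{i. odd i \<and> 1 \<le> i \<and> i \<le> k - 1}. alt (F2 N R n m) (F1 N R n m) i g)
      in A - F2 N R n m A)"

text \<open>h'_n on \<oplus>_{m \<ge> l_N(n)} V^{\<otimes>m}, with ks m the fixed integer k for P_{n,m}.\<close>
definition h' :: "nat \<Rightarrow> ('x::linorder, 'k::field) vec set \<Rightarrow> nat \<Rightarrow> (nat \<Rightarrow> nat) \<Rightarrow> ('x, 'k) vec \<Rightarrow> ('x, 'k) vec" where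
  "h' N R n ks f = (\<Sum>m\<in>{m. lN N n \<le> m \<and> (\<exists>w. length w = m \<and> f w \<noteq> 0)}.
       gamma1 N R n m (ks m) (deg_comp m f))"

end

theory Submission
  imports Defs "HOL-Library.List_Lexorder"
begin
declare plus_fun_apply[simp del] zero_fun_apply[simp del] minus_apply[simp del] uminus_apply[simp del]
lemmas papply = plus_fun_apply zero_fun_apply minus_apply uminus_apply
lemma wless_iff: "wless u w \<longleftrightarrow> u < w"
  by (simp add: wless_def list_less_def)
lemma sum_fun_apply: "(\<Sum>u\<in>F. g u) w = (\<Sum>u\<in>F. g u w)"
  by (induction F rule: infinite_finite_induct) (auto simp: papply)
lemma smul_apply: "smul c v w = c * v w" by (simp add: smul_def)
lemma wvec_apply: "wvec u w = (if w = u then 1 else 0)" by (simp add: wvec_def)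
lemma smul_add: "smul (a + b) v = smul a v + smul b v" 
  by (simp add: smul_def fun_eq_iff papply algebra_simps)
lemma smul_add2: "smul c (u + v) = smul c u + smul c v"
  by (simp add: smul_def fun_eq_iff papply algebra_simps)
lemma  smul_smul: "smul a (smul b v) = smul (a*b) v"
  by (simp add: smul_def fun_eq_iff papply algebra_simps)
lemma smul_sum: "smul c (\<Sum>u\<in>F. g u) = (\<Sum>u\<in>F. smul c (g u))"
  by (simp add: fun_eq_iff papply smul_def sum_fun_apply sum_distrib_left)
lemma smul_minus1: "smul (-1) v = - v" by (simp add: fun_eq_iff papply smul_def)
lemma smul_0: "smul 0 v = 0" and smul_1: "smul 1 v = v" and smul_zero: "smul c 0 = 0"
  by (simp_all add: smul_def fun_eq_iff papply)
lemma span_0: "0 \<in> lin_span S"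
  unfolding lin_span_def by (rule CollectI, rule exI[of _ "{}"]) simp
lemma span_base: "x \<in> S \<Longrightarrow> x \<in> lin_span S"
  unfolding lin_span_def by (rule CollectI, rule exI[of _ "{x}"], rule exI[of _ "\<lambda>_. 1"]) (simp add: smul_1)
lemma span_smul: "x \<in> lin_span S \<Longrightarrow> smul a x \<in> lin_span S"
proof -
  assume "x \<in> lin_span S"
  then obtain F c where F: "finite F" "F \<subseteq> S" "x = (\<Sum>u\<in>F. smul (c u) u)" unfolding lin_span_def by blast
  have "smul a x = (\<Sum>u\<in>F. smul (a * c u) u)" unfolding F(3) smul_sum smul_smul ..
  then show ?thesis using F unfolding lin_span_def by (intro CollectI exI[of _ F] exI[of _ "\<lambda>u. a * c u"]) simp
qed
lemma span_add: "x \<in> lin_span S \<Longrightarrow> y \<in> lin_span S \<Longrightarrow> x + y \<in> lin_span S"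
proof -
  assume "x \<in> lin_span S" "y \<in> lin_span S"
  then obtain F c G d where F: "finite F" "F \<subseteq> S" "x = (\<Sum>u\<in>F. smul (c u) u)"
    and G: "finite G" "G \<subseteq> S" "y = (\<Sum>u\<in>G. smul (d u) u)" unfolding lin_span_def by blast
  define e where "e u = (if u \<in> F then c u else 0) + (if u \<in> G then d u else 0)" for u
  have 1: "(\<Sum>u\<in>F\<union>G. smul (if u \<in> F then c u else 0) u) = x"
    unfolding F(3) by (rule sum.mono_neutral_cong_right) (use F G in \<open>auto simp: smul_0\<close>)
  have 2: "(\<Sum>u\<in>F\<union>G. smul (if u \<in> G then d u else 0) u) = y"
    unfolding G(3) by (rule sum.mono_neutral_cong_right) (use F G in \<open>auto simp: smul_0\<close>)
  have "x + y = (\<Sum>u\<in>F\<union>G. smul (e u) u)"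
    unfolding e_def smul_add sum.distrib 1 2 ..
  then show ?thesis using F G unfolding lin_span_def
    by (intro CollectI exI[of _ "F \<union> G"] exI[of _ e]) simp
qed

lemma span_minus: "x \<in> lin_span S \<Longrightarrow> y \<in> lin_span S \<Longrightarrow> x - y \<in> lin_span S"
  using span_add[of x S "smul (-1) y"] span_smul[of y S "-1"] by (simp add: smul_minus1)

lemma span_sum: "(\<And>i. i \<in> I \<Longrightarrow> g i \<in> lin_span S) \<Longrightarrow> sum g I \<in> lin_span S"
proof (induction I rule: infinite_finite_induct)
  case (infinite A) then show ?case by (simp add: span_0)
next
  case empty then show ?case by (simp add: span_0)
next
  case (insert x F) then show ?case by (simp add: span_add)
qed

lemma span_induct:
  assumes "x \<in> lin_span S" "P 0" "\<And>x y. P x \<Longrightarrow> P y \<Longrightarrow> P (x + y)"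
    "\<And>c x. P x \<Longrightarrow> P (smul c x)" "\<And>s. s \<in> S \<Longrightarrow> P s"
  shows "P x"
proof -
  obtain F c where F: "finite F" "F \<subseteq> S" "x = (\<Sum>u\<in>F. smul (c u) u)"
    using assms(1) unfolding lin_span_def by blast
  have "P (\<Sum>u\<in>F'. smul (c u) u)" if "F' \<subseteq> F" for F'
    using finite_subset[OF that F(1)] that
  proof (induction F' rule: finite_induct)
    case empty then show ?case using assms(2) by simp
  next
    case (insert y F') then show ?case using assms(3,4,5) F(2) by (simp add: subset_iff)
  qed
  then show ?thesis using F by simp
qed

lemma span_mono: "S \<subseteq> T \<Longrightarrow> lin_span S \<subseteq> lin_span T"
  unfolding lin_span_def by blast

lemma span_subspace:
  assumes "x \<in> lin_span S" "\<And>s. s \<in> S \<Longrightarrow> s \<in> lin_span T" shows "x \<in> lin_span T"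
  by (rule span_induct[OF assms(1), where P="\<lambda>x. x \<in> lin_span T"])
    (simp_all add: span_0 span_add span_smul assms(2))

definition supp_on :: "nat \<Rightarrow> ('x, 'k::field) vec \<Rightarrow> bool" where
  "supp_on m v \<longleftrightarrow> (\<forall>w. v w \<noteq> 0 \<longrightarrow> length w = m)"

lemma finite_words: "finite {w::'x::finite list. length w = m}"
  using finite_lists_length_eq[OF finite_UNIV[where 'a='x], of m] by simp

lemma span_supp_on:
  assumes "x \<in> lin_span S" "\<And>s. s \<in> S \<Longrightarrow> supp_on m s" shows "supp_on m x"
proof (rule span_induct[OF assms(1), where P="supp_on m"])
  show "supp_on m 0" by (simp add: supp_on_def papply)
  show "supp_on m (x + y)" if "supp_on m x" "supp_on m y" for x y
    using that unfolding supp_on_def by (metis add.right_neutral plus_fun_apply)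
  show "supp_on m (smul c x)" if "supp_on m x" for c x
    using that unfolding supp_on_def by (simp add: smul_apply)
qed (rule assms(2))

lemma word_expand: 
  assumes "supp_on m (v::('x::finite,'k::field) vec)"
  shows "v = (\<Sum>w\<in>{w. length w = m}. smul (v w) (wvec w))"
proof (rule ext)
  fix z
  have "(\<Sum>w\<in>{w::'x list. length w = m}. smul (v w) (wvec w)) z
     = (\<Sum>w\<in>{w::'x list. length w = m}. if z = w then v z else 0)"
    unfolding sum_fun_apply by (rule sum.cong) (auto simp: smul_apply wvec_apply)
  also have "\<dots> = (if z \<in> {w. length w = m} then v z else 0)" by (rule sum.delta'[OF finite_words])
  also have "\<dots> = v z" using assms by (auto simp: supp_on_def)
  finally show "v z = (\<Sum>w\<in>{w. length w = m}. smul (v w) (wvec w)) z" by simp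
qed

lemma Vpow_iff: "(v::('x::finite,'k::field) vec) \<in> Vpow m \<longleftrightarrow> supp_on m v"
proof
  assume "v \<in> Vpow m" then show "supp_on m v" unfolding Vpow_def
    by (rule span_supp_on) (auto simp: supp_on_def wvec_apply split: if_splits)
next
  assume "supp_on m v"
  then have "v = (\<Sum>w\<in>{w. length w = m}. smul (v w) (wvec w))" by (rule word_expand)
  also have "\<dots> \<in> Vpow m" unfolding Vpow_def
    by (rule span_sum, rule span_smul, rule span_base) auto
  finally show "v \<in> Vpow m" .
qed

lemma Vpow_span: "S \<subseteq> Vpow m \<Longrightarrow> lin_span S \<subseteq> (Vpow m :: ('x::finite,'k::field) vec set)"
proof
  fix x assume "S \<subseteq> Vpow m" "x \<in> lin_span S"
  then have "supp_on m x" by (intro span_supp_on[of x S m]) (auto simp: Vpow_iff)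
  then show "x \<in> Vpow m" by (simp add: Vpow_iff)
qed

lemma Vpow_add: "x \<in> Vpow m \<Longrightarrow> y \<in> Vpow m \<Longrightarrow> x + y \<in> Vpow m"
  and Vpow_minus: "x \<in> Vpow m \<Longrightarrow> y \<in> Vpow m \<Longrightarrow> x - y \<in> Vpow m"
  and Vpow_smul: "x \<in> Vpow m \<Longrightarrow> smul c x \<in> Vpow m"
  and Vpow_zero: "0 \<in> Vpow m"
  and Vpow_sum: "(\<And>i. i \<in> I \<Longrightarrow> g i \<in> Vpow m) \<Longrightarrow> sum g I \<in> Vpow m"
  unfolding Vpow_def by (simp_all add: span_add span_minus span_smul span_0 span_sum)

lemma deg_comp_Vpow: "deg_comp m (v::('x::finite,'k::field) vec) \<in> Vpow m"
  by (simp add: Vpow_iff supp_on_def deg_comp_def)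

lemma deg_comp_id: "(v::('x::finite,'k::field) vec) \<in> Vpow m \<Longrightarrow> deg_comp m v = v"
  by (auto simp: Vpow_iff supp_on_def deg_comp_def fun_eq_iff)

lemma cmul_nz: "cmul a b w \<noteq> 0 \<Longrightarrow> \<exists>i\<le>length w. a (take i w) \<noteq> 0 \<and> b (drop i w) \<noteq> 0"
proof (rule ccontr)
  assume "cmul a b w \<noteq> 0" "\<not> (\<exists>i\<le>length w. a (take i w) \<noteq> 0 \<and> b (drop i w) \<noteq> 0)"
  then have "\<forall>i\<in>{..length w}. a (take i w) * b (drop i w) = 0" by auto
  then have "cmul a b w = 0" unfolding cmul_def by (rule sum.neutral)
  with \<open>cmul a b w \<noteq> 0\<close> show False by simp
qed

lemma cmul_supp: "supp_on p a \<Longrightarrow> supp_on q b \<Longrightarrow> supp_on (p + q) (cmul a b)"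
  unfolding supp_on_def
proof (intro allI impI)
  fix w assume a: "\<forall>w. a w \<noteq> 0 \<longrightarrow> length w = p" and b: "\<forall>w. b w \<noteq> 0 \<longrightarrow> length w = q"
    and "cmul a b w \<noteq> 0"
  then obtain i where "i \<le> length w" "a (take i w) \<noteq> 0" "b (drop i w) \<noteq> 0" using cmul_nz by blast
  then have "length (take i w) = p" "length (drop i w) = q" using a b by auto
  then show "length w = p + q" using \<open>i \<le> length w\<close> by simp
qed

lemma tens_Vpow: "A \<subseteq> Vpow p \<Longrightarrow> B \<subseteq> Vpow q \<Longrightarrow> tens A B \<subseteq> (Vpow (p+q) :: ('x::finite,'k::field) vec set)"
  unfolding tens_def by (rule Vpow_span) (auto simp: Vpow_iff intro!: cmul_supp dest!: subsetD)

section \<open>Reduction operators\<close>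

definition subsp :: "nat \<Rightarrow> ('x::finite, 'k::field) vec set \<Rightarrow> bool" where
  "subsp m W \<longleftrightarrow> W \<subseteq> Vpow m \<and> 0 \<in> W \<and> (\<forall>x\<in>W. \<forall>y\<in>W. x + y \<in> W) \<and> (\<forall>c. \<forall>x\<in>W. smul c x \<in> W)"

lemma subsp_span: "S \<subseteq> Vpow m \<Longrightarrow> subsp m (lin_span S)"
  unfolding subsp_def using Vpow_span[of S m] by (simp add: span_0 span_add span_smul)

lemma subsp_minus: "subsp m W \<Longrightarrow> x \<in> W \<Longrightarrow> y \<in> W \<Longrightarrow> x - y \<in> W"
  unfolding subsp_def by (metis smul_minus1 diff_conv_add_uminus)

definition LW :: "('x::linorder, 'k::field) vec set \<Rightarrow> 'x list set" where
  "LW W = {w. \<exists>f\<in>W. f w \<noteq> 0 \<and> (\<forall>u. f u \<noteq> 0 \<longrightarrow> u \<le> w)}"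

definition NN :: "nat \<Rightarrow> ('x::{finite,linorder}, 'k::field) vec set \<Rightarrow> ('x, 'k) vec set" where
  "NN m W = {v \<in> Vpow m. \<forall>u\<in>LW W. v u = 0}"

lemma supp_finite: "(v::('x::finite,'k::field) vec) \<in> Vpow m \<Longrightarrow> finite {w. v w \<noteq> 0}"
  by (rule finite_subset[OF _ finite_words[of m]]) (auto simp: Vpow_iff supp_on_def)

lemma max_supp:
  assumes "(v::('x::{finite,linorder},'k::field) vec) \<in> Vpow m" "v u \<noteq> 0"
  shows "\<exists>M. v M \<noteq> 0 \<and> u \<le> M \<and> (\<forall>u. v u \<noteq> 0 \<longrightarrow> u \<le> M)"
proof -
  let ?S = "{w. v w \<noteq> 0}"
  have fin: "finite ?S" using supp_finite[OF assms(1)] .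
  have ne: "u \<in> ?S" using assms(2) by simp
  show ?thesis by (rule exI[of _ "Max ?S"]) (use Max_in[OF fin] Max_ge[OF fin] ne in auto)
qed

lemma inter0:
  assumes "subsp m W" "v \<in> W" "v \<in> NN m W" shows "v = 0"
proof (rule ccontr)
  assume "v \<noteq> 0"
  then obtain u where "v u \<noteq> 0" by (auto simp: fun_eq_iff papply)
  have vV: "v \<in> Vpow m" using assms(1,2) by (auto simp: subsp_def)
  obtain M where M: "v M \<noteq> 0" "\<forall>u. v u \<noteq> 0 \<longrightarrow> u \<le> M" using max_supp[OF vV \<open>v u \<noteq> 0\<close>] by blast
  then have "M \<in> LW W" using assms(2) unfolding LW_def by blast
  then show False using assms(3) M(1) unfolding NN_def by blast
qed

lemma NN_closed:
  "x \<in> NN m W \<Longrightarrow> y \<in> NN m W \<Longrightarrow> x + y \<in> NN m W"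
  "x \<in> NN m W \<Longrightarrow> y \<in> NN m W \<Longrightarrow> x - y \<in> NN m W"
  "x \<in> NN m W \<Longrightarrow> smul c x \<in> NN m W"
  "0 \<in> NN m W"
  by (auto simp: NN_def Vpow_add Vpow_minus Vpow_smul Vpow_zero papply smul_apply)


lemma card_less_mono:
  assumes "(u::'x::{finite,linorder} list) < w"
  shows "card {x. length x = m \<and> x < u} < card {x::'x list. length x = m \<and> x < w} \<or> length u \<noteq> m"
proof (cases "length u = m")
  case True
  have "{x. length x = m \<and> x < u} \<subset> {x::'x list. length x = m \<and> x < w}"
    using assms True by auto
  then show ?thesis by (intro disjI1 psubset_card_mono) (auto intro: finite_subset[OF _ finite_words[of m]])
qed simp

lemma decomp:
  assumes W: "subsp m (W::('x::{finite,linorder},'k::field) vec set)" and v: "v \<in> Vpow m"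
  shows "\<exists>a b. a \<in> W \<and> b \<in> NN m W \<and> v = a + b"
proof -
  define D where "D = {x. \<exists>a b. a \<in> W \<and> b \<in> NN m W \<and> x = a + b}"
  have D0: "0 \<in> D" unfolding D_def using W NN_closed(4) by (auto simp: subsp_def intro!: exI[of _ 0])
  have Dadd: "x + y \<in> D" if xy: "x \<in> D" "y \<in> D" for x y
  proof -
    obtain a b a' b' where "a \<in> W" "b \<in> NN m W" "x = a + b" "a' \<in> W" "b' \<in> NN m W" "y = a' + b'"
      using xy unfolding D_def by blast
    then show ?thesis unfolding D_def using W NN_closed(1)[of b m W b']
      by (intro CollectI exI[of _ "a + a'"] exI[of _ "b + b'"]) (auto simp: subsp_def algebra_simps)
  qed
  have Dsmul: "smul c x \<in> D" if xD: "x \<in> D" for c x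
  proof -
    obtain a b where "a \<in> W" "b \<in> NN m W" "x = a + b"
      using xD unfolding D_def by blast
    then show ?thesis unfolding D_def using W NN_closed(3)[of b m W c]
      by (intro CollectI exI[of _ "smul c a"] exI[of _ "smul c b"]) (auto simp: subsp_def smul_add2)
  qed
  have Dsum: "sum g I \<in> D" if "\<And>i. i \<in> I \<Longrightarrow> g i \<in> D" for g and I :: "'b set"
    using that by (induction I rule: infinite_finite_induct) (auto simp: D0 Dadd)
  have Dexp: "x \<in> D" if "x \<in> Vpow m" "\<And>u. length u = m \<Longrightarrow> x u \<noteq> 0 \<Longrightarrow> wvec u \<in> D" for x
  proof -
    have "x = (\<Sum>w\<in>{w. length w = m}. smul (x w) (wvec w))" using that(1) by (simp add: word_expand Vpow_iff)
    also have "\<dots> \<in> D"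
    proof (rule Dsum)
      fix u :: "'x list" assume "u \<in> {w. length w = m}"
      then show "smul (x u) (wvec u) \<in> D" using that(2)[of u] Dsmul D0 by (cases "x u = 0") (auto simp: smul_0)
    qed
    finally show ?thesis .
  qed
  define \<mu> where "\<mu> w = card {x::'x list. length x = m \<and> x < w}" for w
  have wD: "length w = m \<longrightarrow> wvec w \<in> D" for w
  proof (induction w rule: measure_induct_rule[of \<mu>])
    case (less w)
    show ?case
    proof
      assume lw: "length w = m"
      have wV: "wvec w \<in> Vpow m" using lw by (auto simp: Vpow_iff supp_on_def wvec_apply)
      show "wvec w \<in> D"
      proof (cases "w \<in> LW W")
        case False
        have "wvec w \<in> NN m W" using False wV by (auto simp: NN_def wvec_apply)
        then show ?thesis unfolding D_def using W by (intro CollectI exI[of _ 0] exI[of _ "wvec w"]) (auto simp: subsp_def)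
      next
        case True
        then obtain f where f: "f \<in> W" "f w \<noteq> 0" "\<forall>u. f u \<noteq> 0 \<longrightarrow> u \<le> w" unfolding LW_def by blast
        have fV: "f \<in> Vpow m" using W f(1) by (auto simp: subsp_def)
        define r where "r = wvec w - smul (1 / f w) f"
        have rV: "r \<in> Vpow m" unfolding r_def by (intro Vpow_minus Vpow_smul wV fV)
        have rs: "u < w" if "r u \<noteq> 0" for u
        proof -
          have "u \<noteq> w" using that f(2) by (auto simp: r_def papply smul_apply wvec_apply)
          moreover have "u \<le> w" using that f(3) by (cases "f u = 0") (auto simp: r_def papply smul_apply wvec_apply split: if_splits)
          ultimately show ?thesis by simp
        qed
        have "r \<in> D"
        proof (rule Dexp[OF rV])
          fix u assume "length u = m" "r u \<noteq> 0"
          then have "u < w" "\<mu> u < \<mu> w" using rs card_less_mono[of u w m] unfolding \<mu>_def by auto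
          then show "wvec u \<in> D" using less \<open>length u = m\<close> by blast
        qed
        moreover have "smul (1 / f w) f \<in> D" unfolding D_def using W f(1) NN_closed(4)
          by (intro CollectI exI[of _ "smul (1 / f w) f"] exI[of _ 0]) (auto simp: subsp_def)
        ultimately have "smul (1 / f w) f + r \<in> D" by (rule Dadd[rotated])
        then show ?thesis by (simp add: r_def)
      qed
    qed
  qed
  have "v \<in> D" by (rule Dexp[OF v]) (use wD in auto)
  then show ?thesis unfolding D_def by blast
qed


definition T0 :: "nat \<Rightarrow> ('x::{finite,linorder}, 'k::field) vec set \<Rightarrow> ('x, 'k) vec \<Rightarrow> ('x, 'k) vec" where
  "T0 m W v = (THE b. b \<in> NN m W \<and> deg_comp m v - b \<in> W)"

lemma T0_unique:
  assumes W: "subsp m W" and "b1 \<in> NN m W" "x - b1 \<in> W" "b2 \<in> NN m W" "x - b2 \<in> W"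
  shows "b1 = b2"
proof -
  have "b2 - b1 = (x - b1) - (x - b2)" by simp
  then have "b2 - b1 \<in> W" using subsp_minus[OF W assms(3,5)] by simp
  moreover have "b2 - b1 \<in> NN m W" using NN_closed(2) assms(2,4) by blast
  ultimately have "b2 - b1 = 0" using inter0[OF W] by blast
  then show ?thesis by simp
qed

lemma T0_prop:
  assumes W: "subsp m W"
  shows "T0 m W v \<in> NN m W \<and> deg_comp m v - T0 m W v \<in> W"
proof -
  obtain a b where ab: "a \<in> W" "b \<in> NN m W" "deg_comp m v = a + b"
    using decomp[OF W deg_comp_Vpow] by blast
  have ex: "b \<in> NN m W \<and> deg_comp m v - b \<in> W" using ab by simp
  show ?thesis unfolding T0_def
    by (rule theI[where P="\<lambda>b. b \<in> NN m W \<and> deg_comp m v - b \<in> W", OF ex]) (use T0_unique[OF W] ex in blast)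
qed

lemma T0_propV:
  assumes W: "subsp m W" and v: "v \<in> Vpow m"
  shows "T0 m W v \<in> NN m W \<and> v - T0 m W v \<in> W"
  using T0_prop[OF W, of v] unfolding deg_comp_id[OF v] .

lemma T0_char:
  assumes W: "subsp m W" "b \<in> NN m W" "deg_comp m v - b \<in> W"
  shows "T0 m W v = b"
  using T0_unique[OF W(1) _ _ W(2,3)] T0_prop[OF W(1), of v] by blast

lemma deg_comp_idem: "deg_comp m (deg_comp m (v::('x::finite,'k::field) vec)) = deg_comp m v"
  by (simp add: deg_comp_id deg_comp_Vpow)

lemma T0_red_op:
  assumes W: "subsp m (W::('x::{finite,linorder},'k::field) vec set)"
  shows "red_op m (T0 m W)"
  unfolding red_op_def
proof (intro conjI allI ballI impI)
  show "T0 m W v = T0 m W (deg_comp m v)" for v unfolding T0_def deg_comp_idem ..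
  have WV: "W \<subseteq> Vpow m" using W by (simp add: subsp_def)
  fix u v :: "('x,'k) vec" and a b :: 'k assume u: "u \<in> Vpow m" and v: "v \<in> Vpow m"
  have "smul a u + smul b v \<in> Vpow m" using u v by (simp add: Vpow_add Vpow_smul)
  then have dc: "deg_comp m (smul a u + smul b v) = smul a u + smul b v" by (rule deg_comp_id)
  have Pu: "T0 m W u \<in> NN m W" "u - T0 m W u \<in> W" using T0_prop[OF W, of u] deg_comp_id[OF u] by auto
  have Pv: "T0 m W v \<in> NN m W" "v - T0 m W v \<in> W" using T0_prop[OF W, of v] deg_comp_id[OF v] by auto
  have eq: "smul a u + smul b v - (smul a (T0 m W u) + smul b (T0 m W v)) = smul a (u - T0 m W u) + smul b (v - T0 m W v)"
    by (simp add: fun_eq_iff papply smul_apply algebra_simps)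
  show "T0 m W (smul a u + smul b v) = smul a (T0 m W u) + smul b (T0 m W v)"
    by (rule T0_char[OF W]) (use Pu Pv W in \<open>auto simp: dc eq subsp_def intro!: NN_closed\<close>)
next
  fix v :: "('x,'k) vec" assume v: "v \<in> Vpow m"
  have P: "T0 m W v \<in> NN m W" using T0_prop[OF W, of v] by auto
  then show "T0 m W v \<in> Vpow m" by (simp add: NN_def)
  have "deg_comp m (T0 m W v) = T0 m W v" using P by (simp add: NN_def deg_comp_id)
  then show "T0 m W (T0 m W v) = T0 m W v"
    by (intro T0_char[OF W P]) (use W in \<open>simp add: subsp_def\<close>)
next
  fix w :: "'x list" assume lw: "length w = m"
  have wV: "wvec w \<in> Vpow m" using lw by (auto simp: Vpow_iff supp_on_def wvec_apply)
  show "T0 m W (wvec w) = wvec w \<or> T0 m W (wvec w) \<in> lin_span {wvec u |u. length u = m \<and> wless u w}"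
  proof (cases "w \<in> LW W")
    case False
    have "wvec w \<in> NN m W" using False wV by (auto simp: NN_def wvec_apply)
    then have "T0 m W (wvec w) = wvec w" by (rule T0_char[OF W]) (use W in \<open>subst deg_comp_id[OF wV], simp add: subsp_def\<close>)
    then show ?thesis by blast
  next
    case True
    define b where "b = T0 m W (wvec w)"
    have bN: "b \<in> NN m W" and dW: "wvec w - b \<in> W" using T0_propV[OF W wV] by (auto simp: b_def)
    have bw: "b w = 0" using bN True by (simp add: NN_def)
    have bV: "b \<in> Vpow m" using bN by (simp add: NN_def)
    have bs: "u < w" if "b u \<noteq> 0" for u
    proof (rule ccontr)
      assume "\<not> u < w"
      moreover have "u \<noteq> w" using that bw by auto
      ultimately have uw: "w < u" by simp
      let ?d = "wvec w - b"
      have dV: "?d \<in> Vpow m" using W dW by (auto simp: subsp_def)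
      have "?d u \<noteq> 0" using that \<open>u \<noteq> w\<close> by (simp add: papply wvec_apply)
      then obtain M where M: "?d M \<noteq> 0" "u \<le> M" "\<forall>u. ?d u \<noteq> 0 \<longrightarrow> u \<le> M" using max_supp[OF dV] by blast
      then have "M \<in> LW W" using dW unfolding LW_def by blast
      then have "b M = 0" using bN by (simp add: NN_def)
      moreover have "M \<noteq> w" using M(2) uw by auto
      ultimately show False using M(1) by (simp add: papply wvec_apply)
    qed
    have "b = (\<Sum>u\<in>{u. length u = m}. smul (b u) (wvec u))" using bV by (simp add: word_expand Vpow_iff)
    also have "\<dots> \<in> lin_span {wvec u |u. length u = m \<and> wless u w}"
    proof (rule span_sum)
      fix u :: "'x list" assume "u \<in> {u. length u = m}"
      then show "smul (b u) (wvec u) \<in> lin_span {wvec u |u. length u = m \<and> wless u w}"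
      proof (cases "b u = 0")
        case True then show ?thesis by (simp add: smul_0 span_0)
      next
        case False then show ?thesis using bs[of u] \<open>u \<in> {u. length u = m}\<close>
          by (intro span_smul span_base) (auto simp: wless_iff)
      qed
    qed
    finally show ?thesis unfolding b_def by blast
  qed
qed

lemma T0_kernel:
  assumes W: "subsp m (W::('x::{finite,linorder},'k::field) vec set)"
  shows "{v \<in> Vpow m. T0 m W v = 0} = W"
proof
  show "{v \<in> Vpow m. T0 m W v = 0} \<subseteq> W"
  proof
    fix v assume "v \<in> {v \<in> Vpow m. T0 m W v = 0}"
    then have "v \<in> Vpow m" "T0 m W v = 0" by auto
    then show "v \<in> W" using T0_prop[OF W, of v] deg_comp_id[of v m] by simp
  qed
  show "W \<subseteq> {v \<in> Vpow m. T0 m W v = 0}"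
  proof
    fix v assume "v \<in> W"
    then have vV: "v \<in> Vpow m" using W by (auto simp: subsp_def)
    have "T0 m W v = 0" by (rule T0_char[OF W NN_closed(4)]) (use \<open>v \<in> W\<close> deg_comp_id[OF vV] in simp)
    then show "v \<in> {v \<in> Vpow m. T0 m W v = 0}" using vV by simp
  qed
qed


lemma redop_lin2:
  assumes "red_op m T" "x \<in> Vpow m" "y \<in> Vpow m"
  shows "T (smul a x + smul b y) = smul a (T x) + smul b (T y)"
  using assms unfolding red_op_def by blast

lemma redop_0: assumes "red_op m T" shows "T 0 = 0"
  using redop_lin2[OF assms Vpow_zero Vpow_zero, of 0 0] by (simp add: smul_0 smul_zero)

lemma redop_sum:
  assumes T: "red_op m T" and g: "\<And>i. i \<in> I \<Longrightarrow> g i \<in> Vpow m"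
  shows "T (\<Sum>i\<in>I. smul (c i) (g i)) = (\<Sum>i\<in>I. smul (c i) (T (g i)))"
  using g
proof (induction I rule: infinite_finite_induct)
  case (infinite A) then show ?case using redop_0[OF T] by simp
next
  case empty then show ?case using redop_0[OF T] by simp
next
  case (insert i F)
  have r: "(\<Sum>i\<in>F. smul (c i) (g i)) \<in> Vpow m" using insert by (auto intro!: Vpow_sum Vpow_smul)
  have gi: "g i \<in> Vpow m" using insert.prems by simp
  have "T (\<Sum>i\<in>insert i F. smul (c i) (g i)) = T (smul (c i) (g i) + smul 1 (\<Sum>i\<in>F. smul (c i) (g i)))"
    using insert.hyps by (simp add: smul_1)
  also have "\<dots> = smul (c i) (T (g i)) + smul 1 (T (\<Sum>i\<in>F. smul (c i) (g i)))"
    by (rule redop_lin2[OF T gi r])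
  finally show ?case using insert.hyps insert.IH insert.prems by (simp add: smul_1)
qed

lemma redop_apply:
  assumes T: "red_op m T" and x: "(x::('x::{finite,linorder},'k::field) vec) \<in> Vpow m"
  shows "T x z = (\<Sum>u\<in>{u. length u = m}. x u * T (wvec u) z)"
proof -
  have wV: "wvec u \<in> Vpow m" if "u \<in> {u. length u = m}" for u :: "'x list"
    using that by (auto simp: Vpow_iff supp_on_def wvec_apply)
  have "T x = T (\<Sum>u\<in>{u. length u = m}. smul (x u) (wvec u))"
    by (rule arg_cong[where f=T], rule word_expand) (use x in \<open>simp add: Vpow_iff\<close>)
  also have "\<dots> = (\<Sum>u\<in>{u. length u = m}. smul (x u) (T (wvec u)))" by (rule redop_sum[OF T wV])
  finally show ?thesis by (simp add: sum_fun_apply smul_apply)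
qed

lemma redop_word_lt:
  fixes T :: "('x::{finite,linorder},'k::field) vec \<Rightarrow> ('x,'k) vec"
  assumes T: "red_op m T" and "length u = m" "T (wvec u) \<noteq> wvec u" "T (wvec u) z \<noteq> 0"
  shows "z < u"
proof -
  have sp: "T (wvec u) \<in> lin_span {wvec u' |u'. length u' = m \<and> wless u' u}"
    using T assms(2,3) unfolding red_op_def by blast
  have "\<forall>z. T (wvec u) z \<noteq> 0 \<longrightarrow> z < u"
  proof (rule span_induct[OF sp, where P="\<lambda>y. \<forall>z. y z \<noteq> 0 \<longrightarrow> z < u"])
    show "\<forall>z. (0::('x,'k) vec) z \<noteq> 0 \<longrightarrow> z < u" by (simp add: papply)
    show "\<forall>z. (x + y) z \<noteq> 0 \<longrightarrow> z < u" if "\<forall>z. x z \<noteq> 0 \<longrightarrow> z < u" "\<forall>z. y z \<noteq> 0 \<longrightarrow> z < u" for x y :: "('x,'k) vec"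
      using that by (metis add.right_neutral plus_fun_apply)
    show "\<forall>z. smul c x z \<noteq> 0 \<longrightarrow> z < u" if "\<forall>z. x z \<noteq> 0 \<longrightarrow> z < u" for c x
      using that by (simp add: smul_apply)
    show "\<forall>z. s z \<noteq> 0 \<longrightarrow> z < u" if "s \<in> {wvec u' |u'. length u' = m \<and> wless u' u}" for s
      using that by (auto simp: wvec_apply wless_iff split: if_splits)
  qed
  then show ?thesis using assms(4) by blast
qed

lemma redop_word_le:
  fixes T :: "('x::{finite,linorder},'k::field) vec \<Rightarrow> ('x,'k) vec"
  assumes T: "red_op m T" and "length u = m" "T (wvec u) z \<noteq> 0"
  shows "z \<le> u"
proof (cases "T (wvec u) = wvec u")
  case True then show ?thesis using assms(3) by (auto simp: wvec_apply split: if_splits)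
next
  case False then show ?thesis using redop_word_lt[OF T assms(2) False assms(3)] by simp
qed

lemma redop_claimA:
  assumes T: "red_op m T" and x: "(x::('x::{finite,linorder},'k::field) vec) \<in> Vpow m" and fx: "T x = x"
    and b: "length b = m" "T (wvec b) \<noteq> wvec b"
  shows "x b = 0"
proof (rule ccontr)
  assume xb: "x b \<noteq> 0"
  let ?S = "{b. length b = m \<and> T (wvec b) \<noteq> wvec b \<and> x b \<noteq> 0}"
  have fin: "finite ?S" by (rule finite_subset[OF _ finite_words[of m]]) auto
  have "b \<in> ?S" using b xb by simp
  then have ne: "?S \<noteq> {}" by blast
  define M where "M = Max ?S"
  have MS: "M \<in> ?S" unfolding M_def using Max_in[OF fin ne] .
  have Mge: "u \<le> M" if "u \<in> ?S" for u unfolding M_def using Max_ge[OF fin that] .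
  have "x M = T x M" using fx by simp
  also have "\<dots> = (\<Sum>u\<in>{u. length u = m}. x u * T (wvec u) M)" by (rule redop_apply[OF T x])
  also have "\<dots> = 0"
  proof (rule sum.neutral, rule ballI)
    fix u :: "'x list" assume u: "u \<in> {u. length u = m}"
    show "x u * T (wvec u) M = 0"
    proof (cases "x u = 0")
      case False
      show ?thesis
      proof (cases "T (wvec u) = wvec u")
        case True
        then show ?thesis using MS by (auto simp: wvec_apply)
      next
        case nf: False
        then have "u \<le> M" using Mge u False by simp
        then have "T (wvec u) M = 0" using redop_word_lt[OF T _ nf, of M] u by force
        then show ?thesis by simp
      qed
    qed simp
  qed
  finally show False using MS by simp
qed

lemma redop_claimB:
  fixes T :: "('x::{finite,linorder},'k::field) vec \<Rightarrow> ('x,'k) vec"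
  assumes T: "red_op m T" and K: "{v \<in> Vpow m. T v = 0} = W" and w: "w \<in> LW W"
  shows "length w = m \<and> T (wvec w) \<noteq> wvec w"
proof -
  obtain f where f: "f \<in> W" "f w \<noteq> 0" "\<forall>u. f u \<noteq> 0 \<longrightarrow> u \<le> w" using w unfolding LW_def by blast
  have fV: "f \<in> Vpow m" and Tf: "T f = 0" using f(1) K by auto
  have lw: "length w = m" using fV f(2) by (auto simp: Vpow_iff supp_on_def)
  have "0 = T f w" using Tf by (simp add: papply)
  also have "\<dots> = (\<Sum>u\<in>{u. length u = m}. (f u * T (wvec u) w :: 'k))" by (rule redop_apply[OF T fV])
  also have "\<dots> = (\<Sum>u\<in>{u. length u = m}. if w = u then f w * T (wvec w) w else 0)"
  proof (rule sum.cong[OF refl])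
    fix u :: "'x list" assume u: "u \<in> {u. length u = m}"
    show "f u * T (wvec u) w = (if w = u then f w * T (wvec w) w else 0)"
    proof (cases "w = u \<or> f u = 0")
      case False
      then have "u < w" using f(3) by force
      have "T (wvec u) w = 0" using redop_word_le[OF T _, of u w] u \<open>u < w\<close> by force
      then show ?thesis using False by simp
    qed auto
  qed
  also have "\<dots> = f w * T (wvec w) w" using lw by (simp add: sum.delta'[OF finite_words])
  finally have "T (wvec w) w = 0" using f(2) by simp
  then show ?thesis using lw by (auto simp: wvec_apply)
qed

lemma redop_unique:
  fixes T :: "('x::{finite,linorder},'k::field) vec \<Rightarrow> ('x,'k) vec"
  assumes W: "subsp m W" and T: "red_op m T" and K: "{v \<in> Vpow m. T v = 0} = W"
  shows "T = T0 m W"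
proof (rule ext)
  fix v :: "('x,'k) vec"
  define y where "y = deg_comp m v"
  have yV: "y \<in> Vpow m" unfolding y_def by (rule deg_comp_Vpow)
  have T1: "T v = T y" using T unfolding red_op_def y_def by blast
  have T2: "T0 m W v = T0 m W y" using T0_red_op[OF W] unfolding red_op_def y_def by blast
  have TyV: "T y \<in> Vpow m" and TT: "T (T y) = T y" using T yV unfolding red_op_def by blast+
  have N: "T y \<in> NN m W" unfolding NN_def
    using TyV redop_claimA[OF T TyV TT] redop_claimB[OF T K] by blast
  have "T (smul 1 y + smul (-1) (T y)) = smul 1 (T y) + smul (-1) (T (T y))"
    by (rule redop_lin2[OF T yV TyV])
  then have "T (y - T y) = 0" using TT by (simp add: smul_1 smul_minus1)
  then have "y - T y \<in> W" using K Vpow_minus[OF yV TyV] by blast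
  then have "T0 m W y = T y" by (intro T0_char[OF W N]) (simp add: deg_comp_id[OF yV])
  then show "T v = T0 m W v" using T1 T2 by simp
qed

lemma theta_inv_T0:
  assumes W: "subsp m (W::('x::{finite,linorder},'k::field) vec set)"
  shows "theta_inv m W = T0 m W"
  unfolding theta_inv_def
proof (rule the_equality)
  show "red_op m (T0 m W) \<and> {v \<in> Vpow m. T0 m W v = 0} = W" using T0_red_op[OF W] T0_kernel[OF W] by blast
  show "T = T0 m W" if "red_op m T \<and> {v \<in> Vpow m. T v = 0} = W" for T
    using redop_unique[OF W] that by blast
qed


section \<open>Words and products\<close>

lemma take_eq_iff: "i \<le> length z \<Longrightarrow> take i z = u \<longleftrightarrow> i = length u \<and> (\<exists>y. z = u @ y)"
  by (metis append_take_drop_id append_eq_conv_conj length_take min.absorb2)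

lemma drop_eq_iff: "i \<le> length z \<Longrightarrow> drop i z = v \<longleftrightarrow> i = length z - length v \<and> (\<exists>y. z = y @ v)"
  by (metis append_take_drop_id append_eq_conv_conj diff_diff_cancel length_drop length_append add_diff_cancel_right' drop_all)

lemma cmul_wvec_left:
  "cmul (wvec u) g z = (if \<exists>y. z = u @ y then g (drop (length u) z) else 0)"
proof -
  have "cmul (wvec u) g z = (\<Sum>i\<in>{..length z}. if i = length u then (if \<exists>y. z = u @ y then g (drop (length u) z) else 0) else 0)"
    unfolding cmul_def by (rule sum.cong[OF refl]) (auto simp: wvec_apply take_eq_iff)
  also have "\<dots> = (if \<exists>y. z = u @ y then g (drop (length u) z) else 0)"
    by (auto simp: sum.delta)
  finally show ?thesis .
qed

lemma cmul_wvec_right: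
  "cmul g (wvec v) z = (if \<exists>y. z = y @ v then g (take (length z - length v) z) else 0)"
proof -
  have "cmul g (wvec v) z = (\<Sum>i\<in>{..length z}. if i = length z - length v then (if \<exists>y. z = y @ v then g (take (length z - length v) z) else 0) else 0)"
    unfolding cmul_def by (rule sum.cong[OF refl]) (auto simp: wvec_apply drop_eq_iff)
  also have "\<dots> = (if \<exists>y. z = y @ v then g (take (length z - length v) z) else 0)"
    by (auto simp: sum.delta)
  finally show ?thesis .
qed

lemma cmul_left_eval: "cmul (wvec u) g (u @ y) = g y"
  by (simp add: cmul_wvec_left)
lemma cmul_left_supp: "cmul (wvec u) g z \<noteq> 0 \<Longrightarrow> \<exists>y. z = u @ y \<and> cmul (wvec u) g z = g y"
  by (auto simp: cmul_wvec_left split: if_splits)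
lemma cmul_right_eval: "cmul g (wvec v) (y @ v) = g y"
  by (simp add: cmul_wvec_right)
lemma cmul_right_supp: "cmul g (wvec v) z \<noteq> 0 \<Longrightarrow> \<exists>y. z = y @ v \<and> cmul g (wvec v) z = g y"
  by (auto simp: cmul_wvec_right split: if_splits)


lemma lm_prop:
  assumes f: "(f::('x::{finite,linorder},'k::field) vec) \<in> Vpow N" "f \<noteq> 0"
  shows "f (lm f) \<noteq> 0 \<and> (\<forall>u. f u \<noteq> 0 \<longrightarrow> u = lm f \<or> u < lm f) \<and> length (lm f) = N"
proof -
  obtain u where "f u \<noteq> 0" using f(2) by (auto simp: fun_eq_iff papply)
  then obtain M where M: "f M \<noteq> 0" "\<forall>u. f u \<noteq> 0 \<longrightarrow> u \<le> M" using max_supp[OF f(1)] by blast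
  have P: "f M \<noteq> 0 \<and> (\<forall>u. f u \<noteq> 0 \<longrightarrow> u = M \<or> wless u M)" using M by (auto simp: wless_iff order.order_iff_strict)
  have "lm f = M" unfolding lm_def
  proof (rule the_equality[where P="\<lambda>w. f w \<noteq> 0 \<and> (\<forall>u. f u \<noteq> 0 \<longrightarrow> u = w \<or> wless u w)", OF P])
    fix w assume "f w \<noteq> 0 \<and> (\<forall>u. f u \<noteq> 0 \<longrightarrow> u = w \<or> wless u w)"
    then show "w = M" using P by (metis wless_iff less_asym)
  qed
  then show ?thesis using P f(1) by (auto simp: wless_iff Vpow_iff supp_on_def)
qed

lemma less_mid:
  assumes "(x::'a::linorder list) < y" "length x = length y"
  shows "u @ x @ r < u @ y @ r'"
proof -
  have "(x @ r, y @ r') \<in> lexord {(a, b). a < b}"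
    using assms by (intro lexord_sufI) (auto simp: list_less_def)
  then have "(u @ x @ r, u @ y @ r') \<in> lexord {(a, b). a < b}" by (rule lexord_append_leftI)
  then show ?thesis by (simp add: list_less_def)
qed

lemma wvec_Vpow: "wvec u \<in> (Vpow (length u) :: ('x::finite,'k::field) vec set)"
  by (auto simp: Vpow_iff supp_on_def wvec_apply)

lemma tens_base: "a \<in> A \<Longrightarrow> b \<in> B \<Longrightarrow> cmul a b \<in> tens A B"
  unfolding tens_def by (rule span_base) blast

lemma nonnormal_in_LW:
  fixes R :: "('x::{finite,linorder},'k::field) vec set"
  assumes red: "reduced_pres N R" and lw: "length w = m" and aj: "a \<le> j" and jl: "j + l = m"
    and nn: "\<not> normal_word R (take a w)"
  shows "w \<in> LW (tens (IR N R j) (Vpow l))"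
proof -
  obtain f u v where f: "f \<in> R" and uv: "take a w = u @ lm f @ v" using nn unfolding normal_word_def by blast
  have fV: "f \<in> Vpow N" and f1: "f (lm f) = 1" and fnz: "f \<noteq> 0" using red f unfolding reduced_pres_def by auto
  have lmp: "f (lm f) \<noteq> 0" "\<forall>x. f x \<noteq> 0 \<longrightarrow> x = lm f \<or> x < lm f" "length (lm f) = N" using lm_prop[OF fV fnz] by auto
  define v' where "v' = v @ drop a (take j w)"
  define s where "s = drop j w"
  have wsplit: "w = u @ lm f @ v' @ s"
  proof -
    have "take j w = take a w @ drop a (take j w)" using aj by (metis append_take_drop_id take_take min.absorb1)
    then have "take j w = u @ lm f @ v'" using uv by (simp add: v'_def)
    then show ?thesis unfolding s_def by (metis append_take_drop_id append.assoc)
  qed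
  have ls: "length s = l" using lw jl by (simp add: s_def)
  have lj: "length u + N + length v' = j" using wsplit lw jl ls lmp(3) by simp
  define e where "e = cmul (cmul (cmul (wvec u) f) (wvec v')) (wvec s)"
  have e_eval: "e (u @ x @ v' @ s) = f x" for x
    unfolding e_def using cmul_right_eval[of "cmul (cmul (wvec u) f) (wvec v')" s "u @ x @ v'"]
      cmul_right_eval[of "cmul (wvec u) f" v' "u @ x"] cmul_left_eval[of u f x] by simp
  have e_supp: "\<exists>x. z = u @ x @ v' @ s \<and> e z = f x" if ez: "e z \<noteq> 0" for z
  proof -
    obtain y1 where y1: "z = y1 @ s" "e z = cmul (cmul (wvec u) f) (wvec v') y1"
      using cmul_right_supp[of _ s z] ez unfolding e_def by blast
    then obtain y2 where y2: "y1 = y2 @ v'" "e z = cmul (wvec u) f y2"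
      using cmul_right_supp[of _ v' y1] ez by force
    then obtain x where x: "y2 = u @ x" "e z = f x"
      using cmul_left_supp[of u f y2] ez by force
    show ?thesis using y1 y2 x by auto
  qed
  have jN: "\<not> j < N" using lj by simp
  have eW: "e \<in> tens (IR N R j) (Vpow l)"
  proof -
    have "cmul (wvec u) f \<in> tens (Vpow (length u)) (Rbar R)"
      by (rule tens_base[OF wvec_Vpow]) (simp add: Rbar_def span_base f)
    moreover have "j - N - length u = length v'" using lj by simp
    then have "wvec v' \<in> Vpow (j - N - length u)" using wvec_Vpow[of v'] by simp
    ultimately have "cmul (cmul (wvec u) f) (wvec v') \<in> tens (tens (Vpow (length u)) (Rbar R)) (Vpow (j - N - length u))"
      by (rule tens_base)
    then have mem: "cmul (cmul (wvec u) f) (wvec v') \<in> (\<Union>i\<in>{0..j - N}. tens (tens (Vpow i) (Rbar R)) (Vpow (j - N - i)))"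
      by (intro UN_I[of "length u"]) (use lj in auto)
    have "cmul (cmul (wvec u) f) (wvec v') \<in> IR N R j"
      unfolding IR_def if_not_P[OF jN] by (rule span_base[OF mem])
    then show ?thesis unfolding e_def using wvec_Vpow[of s] ls by (metis tens_base)
  qed
  show ?thesis unfolding LW_def
  proof (intro CollectI bexI[OF _ eW] conjI allI impI)
    show "e w \<noteq> 0" using wsplit e_eval f1 by simp
    fix z assume "e z \<noteq> 0"
    then obtain x where x: "z = u @ x @ v' @ s" "e z = f x" using e_supp by blast
    then have "f x \<noteq> 0" using \<open>e z \<noteq> 0\<close> by simp
    have lx: "length x = N" using fV \<open>f x \<noteq> 0\<close> by (auto simp: Vpow_iff supp_on_def)
    show "z \<le> w"
    proof (cases "x = lm f")
      case True then show ?thesis using x wsplit by simp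
    next
      case False
      then have "x < lm f" using lmp(2) \<open>f x \<noteq> 0\<close> by blast
      then show ?thesis using x wsplit less_mid[of x "lm f" u "v' @ s" "v' @ s"] lx lmp(3) by simp
    qed
  qed
qed


section \<open>Normal forms and restrictions\<close>

lemma reduction_normal:
  assumes "(reduction_step R)\<^sup>*\<^sup>* g h" "normal_elem R g" shows "h = g"
  using assms(1)
proof (induction rule: rtranclp_induct)
  case base then show ?case by simp
next
  case (step y z)
  then have "reduction_step R g z" by simp
  then obtain u f v where f: "f \<in> R" "z = g - smul (g (u @ lm f @ v)) (cmul (cmul (wvec u) f) (wvec v))"
    unfolding reduction_step_def by blast
  have "\<not> normal_word R (u @ lm f @ v)" using f(1) unfolding normal_word_def by blast
  then have "g (u @ lm f @ v) = 0" using assms(2) unfolding normal_elem_def by blast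
  then show ?case using f(2) by (simp add: smul_0)
qed

lemma nf_normal: "normal_elem R g \<Longrightarrow> nf R g = g"
  unfolding nf_def
proof (rule the_equality)
  assume "normal_elem R g"
  then show "normal_elem R g \<and> (reduction_step R)\<^sup>*\<^sup>* g g" by simp
  show "h = g" if "normal_elem R h \<and> (reduction_step R)\<^sup>*\<^sup>* g h" for h
    using that reduction_normal[of R g h] \<open>normal_elem R g\<close> by blast
qed

definition rest :: "('x list \<Rightarrow> bool) \<Rightarrow> nat \<Rightarrow> ('x, 'k::field) vec \<Rightarrow> ('x, 'k) vec" where
  "rest P a y = (\<lambda>w. if P (take a w) then y w else 0)"

definition restw :: "('x list \<Rightarrow> bool) \<Rightarrow> ('x, 'k::field) vec \<Rightarrow> ('x, 'k) vec" where
  "restw P x = (\<lambda>u. if P u then x u else 0)"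

lemma rest_cmul:
  assumes x: "(x::('x::finite,'k::field) vec) \<in> Vpow a"
  shows "rest P a (cmul x j) = cmul (restw P x) j"
proof (rule ext)
  fix w
  have "rest P a (cmul x j) w = (\<Sum>i\<le>length w. if P (take a w) then x (take i w) * j (drop i w) else 0)"
    unfolding rest_def cmul_def by simp
  also have "\<dots> = (\<Sum>i\<le>length w. restw P x (take i w) * j (drop i w))"
  proof (rule sum.cong[OF refl])
    fix i assume i: "i \<in> {..length w}"
    show "(if P (take a w) then x (take i w) * j (drop i w) else 0) = restw P x (take i w) * j (drop i w)"
    proof (cases "x (take i w) = 0")
      case False
      then have "length (take i w) = a" using x by (auto simp: Vpow_iff supp_on_def)
      then have "take i w = take a w" using i by simp
      then show ?thesis by (simp add: restw_def)
    qed (simp add: restw_def)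
  qed
  finally show "rest P a (cmul x j) w = cmul (restw P x) j w" by (simp add: cmul_def)
qed

lemma restw_Vpow: "(x::('x::finite,'k::field) vec) \<in> Vpow a \<Longrightarrow> restw P x \<in> Vpow a"
  by (auto simp: Vpow_iff supp_on_def restw_def)

lemma rest_tens:
  assumes y: "(y::('x::finite,'k::field) vec) \<in> tens (Vpow a) JJ"
  shows "rest P a y \<in> lin_span {cmul (restw P x) j |x j. x \<in> Vpow a \<and> j \<in> JJ}"
proof (rule span_induct[OF y[unfolded tens_def], where P="\<lambda>y. rest P a y \<in> lin_span {cmul (restw P x) j |x j. x \<in> Vpow a \<and> j \<in> JJ}"])
  show "rest P a 0 \<in> lin_span {cmul (restw P x) j |x j. x \<in> Vpow a \<and> j \<in> JJ}"
  proof -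
    have "rest P a (0::('x,'k) vec) = 0" by (simp add: rest_def fun_eq_iff papply)
    then show ?thesis using span_0 by simp
  qed
  show "rest P a (x + y) \<in> lin_span {cmul (restw P x) j |x j. x \<in> Vpow a \<and> j \<in> JJ}"
    if "rest P a x \<in> lin_span {cmul (restw P x) j |x j. x \<in> Vpow a \<and> j \<in> JJ}"
       "rest P a y \<in> lin_span {cmul (restw P x) j |x j. x \<in> Vpow a \<and> j \<in> JJ}" for x y
  proof -
    have "rest P a (x + y) = rest P a x + rest P a y" by (simp add: rest_def fun_eq_iff papply)
    then show ?thesis using span_add[OF that] by simp
  qed
  show "rest P a (smul c x) \<in> lin_span {cmul (restw P x) j |x j. x \<in> Vpow a \<and> j \<in> JJ}"
    if "rest P a x \<in> lin_span {cmul (restw P x) j |x j. x \<in> Vpow a \<and> j \<in> JJ}" for c x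
  proof -
    have "rest P a (smul c x) = smul c (rest P a x)" by (simp add: rest_def fun_eq_iff smul_apply)
    then show ?thesis using span_smul[OF that] by simp
  qed
  show "rest P a s \<in> lin_span {cmul (restw P x) j |x j. x \<in> Vpow a \<and> j \<in> JJ}"
    if sG: "s \<in> {cmul a' b |a' b. a' \<in> Vpow a \<and> b \<in> JJ}" for s
  proof -
    obtain a' b where "s = cmul a' b" "a' \<in> Vpow a" "b \<in> JJ" using sG by blast
    then show ?thesis using rest_cmul[of a' a P b] by (intro span_base) blast
  qed
qed

lemma rest_tens_same:
  assumes y: "(y::('x::finite,'k::field) vec) \<in> tens (Vpow a) JJ"
  shows "rest P a y \<in> tens (Vpow a) JJ"
proof -
  have "lin_span {cmul (restw P x) j |x j. x \<in> Vpow a \<and> j \<in> JJ} \<subseteq> tens (Vpow a) JJ"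
    unfolding tens_def by (rule span_mono) (auto intro: restw_Vpow)
  then show ?thesis using rest_tens[OF y] by blast
qed

lemma restw_nf:
  assumes x: "(x::('x::{finite,linorder},'k::field) vec) \<in> Vpow a"
  shows "restw (normal_word R) x \<in> nf R ` TV"
proof -
  have n: "normal_elem R (restw (normal_word R) x)" by (auto simp: normal_elem_def restw_def split: if_splits)
  have "finite {w. restw (normal_word R) x w \<noteq> 0}"
    by (rule finite_subset[OF _ supp_finite[OF x]]) (auto simp: restw_def split: if_splits)
  then have "restw (normal_word R) x \<in> TV" by (simp add: TV_def)
  then show ?thesis using nf_normal[OF n] by (metis image_eqI)
qed

lemma rest_tens_nf:
  assumes y: "(y::('x::{finite,linorder},'k::field) vec) \<in> tens (Vpow a) JJ"
  shows "rest (normal_word R) a y \<in> tens (nf R ` TV) JJ"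
proof -
  have "lin_span {cmul (restw (normal_word R) x) j |x j. x \<in> Vpow a \<and> j \<in> JJ} \<subseteq> tens (nf R ` TV) JJ"
    unfolding tens_def by (rule span_mono) (auto intro: restw_nf)
  then show ?thesis using rest_tens[OF y] by blast
qed


lemma subsp_tens:
  assumes "A \<subseteq> Vpow p" "B \<subseteq> Vpow q" shows "subsp (p + q) (tens A B :: ('x::finite,'k::field) vec set)"
  unfolding tens_def
proof (rule subsp_span)
  show "{cmul a b |a b. a \<in> A \<and> b \<in> B} \<subseteq> Vpow (p + q)"
    using assms by (auto simp: Vpow_iff intro!: cmul_supp dest!: subsetD)
qed

lemma Rbar_Vpow: "reduced_pres N R \<Longrightarrow> Rbar R \<subseteq> (Vpow N :: ('x::{finite,linorder},'k::field) vec set)"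
  unfolding Rbar_def reduced_pres_def by (intro Vpow_span) blast

lemma IR_Vpow:
  assumes red: "reduced_pres N (R::('x::{finite,linorder},'k::field) vec set)"
  shows "IR N R j \<subseteq> Vpow j"
proof (cases "j < N")
  case True then show ?thesis by (simp add: IR_def Vpow_zero)
next
  case False
  have H: "tens (tens (Vpow i) (Rbar R)) (Vpow (j - N - i)) \<subseteq> Vpow j" if "i \<in> {0..j - N}" for i
  proof -
    have "tens (Vpow i) (Rbar R) \<subseteq> Vpow (i + N)" by (rule tens_Vpow) (use Rbar_Vpow[OF red] in auto)
    then have "tens (tens (Vpow i) (Rbar R)) (Vpow (j - N - i)) \<subseteq> Vpow (i + N + (j - N - i))"
      by (rule tens_Vpow) simp
    also have "i + N + (j - N - i) = j" using that False by auto
    finally show ?thesis .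
  qed
  show ?thesis unfolding IR_def if_not_P[OF False] by (rule Vpow_span) (use H in blast)
qed

lemma lN_1: "lN N 1 = 1" and lN_2: "lN N 2 = N" by (simp_all add: lN_def)

lemma lN_ge: "n \<ge> 2 \<Longrightarrow> lN N n \<ge> N"
proof -
  assume "n \<ge> 2"
  then have "n div 2 \<ge> 1" by simp
  then have "1 * N \<le> (n div 2) * N" by (rule mult_le_mono1)
  then have "N \<le> (n div 2) * N" by simp
  then show ?thesis unfolding lN_def by (simp add: le_SucI)
qed

lemma lN_mono: "N \<ge> 1 \<Longrightarrow> lN N n \<le> lN N (n + 1)"
proof (cases "even n")
  case True then show ?thesis by (simp add: lN_def)
next
  case False
  assume N: "N \<ge> 1"
  have "Suc n div 2 = n div 2 + 1" using False by presburger
  then show ?thesis using False N by (simp add: lN_def)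
qed

lemma J_Vpow:
  assumes red: "reduced_pres N (R::('x::{finite,linorder},'k::field) vec set)" and n: "n' \<ge> 1"
  shows "J N R n' \<subseteq> Vpow (lN N n')"
proof -
  consider "n' = 1" | "n' = 2" | "n' \<ge> 3" using n by linarith
  then show ?thesis
  proof cases
    case 1 then show ?thesis by (simp add: J_def lN_def)
  next
    case 2 then show ?thesis using Rbar_Vpow[OF red] by (simp add: J_def lN_2)
  next
    case 3
    have ge: "lN N n' \<ge> N" using lN_ge[of n' N] 3 by simp
    have "J N R n' \<subseteq> tens (tens (Vpow 0) (Rbar R)) (Vpow (lN N n' - N - 0))"
    proof
      fix x assume "x \<in> J N R n'"
      then have "\<forall>i\<in>{0..lN N n' - N}. x \<in> tens (tens (Vpow i) (Rbar R)) (Vpow (lN N n' - N - i))"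
        using 3 unfolding J_def by simp
      then show "x \<in> tens (tens (Vpow 0) (Rbar R)) (Vpow (lN N n' - N - 0))" by (rule bspec) simp
    qed
    also have "\<dots> \<subseteq> Vpow (0 + N + (lN N n' - N - 0))"
      by (rule tens_Vpow, rule tens_Vpow) (use Rbar_Vpow[OF red] in auto)
    also have "0 + N + (lN N n' - N - 0) = lN N n'" using ge by simp
    finally show ?thesis .
  qed
qed

lemma alt_left: "k > 0 \<Longrightarrow> \<exists>y. alt t s k x = (if odd k then s else t) y"
proof (induction k arbitrary: t s x)
  case 0 then show ?case by simp
next
  case (Suc k)
  show ?case
  proof (cases "k = 0")
    case True then show ?thesis by auto
  next
    case False
    then obtain y where "alt s t k (s x) = (if odd k then t else s) y" using Suc.IH[of s t "s x"] by blast
    then show ?thesis by auto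
  qed
qed

lemma NN_sum: "(\<And>i. i \<in> I \<Longrightarrow> g i \<in> NN m W) \<Longrightarrow> sum g I \<in> NN m W"
  by (induction I rule: infinite_finite_induct) (auto intro: NN_closed)


lemma gamma_in:
  fixes R :: "('x::{finite,linorder},'k::field) vec set"
  assumes red: "reduced_pres N R" and N1: "N \<ge> 1" and g: "g \<in> Vpow m" and ml: "lN N n \<le> m"
  shows "gamma1 N R n m k g \<in> tens (nf R ` TV) (J N R (n + 1))"
proof (cases "m < lN N (n + 1)")
  case True
  then show ?thesis unfolding gamma1_def F2_def tens_def by (simp add: Let_def span_0)
next
  case False
  define l where "l = lN N n"
  define l' where "l' = lN N (n + 1)"
  define a where "a = m - l'"
  have ll': "l \<le> l'" unfolding l_def l'_def using lN_mono[OF N1] .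
  have l'm: "l' \<le> m" using False by (simp add: l'_def)
  have lm: "l \<le> m" using ml by (simp add: l_def)
  define W1 where "W1 = tens (IR N R (m - l)) (Vpow l)"
  define W2 where "W2 = tens (Vpow a) (J N R (n + 1))"
  have S1: "subsp m W1"
  proof -
    have "subsp (m - l + l) W1" unfolding W1_def by (rule subsp_tens[OF IR_Vpow[OF red]]) simp
    then show ?thesis using lm by simp
  qed
  have S2: "subsp m W2"
  proof -
    have "subsp (a + l') W2" unfolding W2_def l'_def by (rule subsp_tens[OF _ J_Vpow[OF red]]) simp_all
    then show ?thesis using l'm by (simp add: a_def)
  qed
  have F1eq: "F1 N R n m = T0 m W1" unfolding F1_def W1_def l_def[symmetric] using theta_inv_T0[OF S1] by (simp add: W1_def)
  have F2eq: "F2 N R n m = T0 m W2" unfolding F2_def using False theta_inv_T0[OF S2]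
    by (simp add: W2_def a_def l'_def)
  define A where "A = (\<Sum>i\<in>{i. odd i \<and> 1 \<le> i \<and> i \<le> k - 1}. alt (T0 m W2) (T0 m W1) i g)"
  have gam: "gamma1 N R n m k g = A - T0 m W2 A" unfolding gamma1_def F1eq F2eq A_def Let_def ..
  have AN: "A \<in> NN m W1" unfolding A_def
  proof (rule NN_sum)
    fix i assume "i \<in> {i. odd i \<and> 1 \<le> i \<and> i \<le> k - 1}"
    then have "odd i" "i > 0" by auto
    then obtain y where "alt (T0 m W2) (T0 m W1) i g = T0 m W1 y" using alt_left[of i "T0 m W2" "T0 m W1" g] by auto
    then show "alt (T0 m W2) (T0 m W1) i g \<in> NN m W1" using T0_prop[OF S1, of y] by simp
  qed
  have AV: "A \<in> Vpow m" using AN by (simp add: NN_def)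
  have AQ: "A w = 0" if "\<not> normal_word R (take a w)" for w
  proof (cases "length w = m")
    case True
    have "w \<in> LW W1" unfolding W1_def
      by (rule nonnormal_in_LW[OF red True _ _ that]) (use ll' lm in \<open>simp_all add: a_def\<close>)
    then show ?thesis using AN by (simp add: NN_def)
  next
    case False then show ?thesis using AV by (auto simp: Vpow_iff supp_on_def)
  qed
  define \<gamma> where "\<gamma> = A - T0 m W2 A"
  have P2: "T0 m W2 A \<in> NN m W2" "\<gamma> \<in> W2" using T0_propV[OF S2 AV] by (auto simp: \<gamma>_def)
  define r where "r = rest (\<lambda>p. \<not> normal_word R p) a \<gamma>"
  have rW: "r \<in> W2" unfolding r_def W2_def by (rule rest_tens_same) (use P2 in \<open>simp add: W2_def\<close>)
  have rN: "r \<in> NN m W2" unfolding NN_def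
  proof (intro CollectI conjI ballI)
    show "r \<in> Vpow m" using rW S2 by (auto simp: subsp_def)
    fix u assume "u \<in> LW W2"
    then have "T0 m W2 A u = 0" using P2(1) by (simp add: NN_def)
    then show "r u = 0" using AQ[of u] by (simp add: r_def rest_def \<gamma>_def papply)
  qed
  have r0: "r = 0" by (rule inter0[OF S2 rW rN])
  have "\<gamma> = rest (normal_word R) a \<gamma>"
  proof (rule ext)
    fix w
    show "\<gamma> w = rest (normal_word R) a \<gamma> w"
    proof (cases "normal_word R (take a w)")
      case True then show ?thesis by (simp add: rest_def)
    next
      case False
      have "r w = 0" using r0 by (simp add: papply)
      then show ?thesis using False by (simp add: r_def rest_def)
    qed
  qed
  also have "\<dots> \<in> tens (nf R ` TV) (J N R (n + 1))"
    by (rule rest_tens_nf) (use P2 in \<open>simp add: W2_def\<close>)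
  finally show ?thesis unfolding gam \<gamma>_def .
qed

theorem lemma4p2p2:
  fixes N :: nat and R :: "('x::{finite,linorder}, 'k::field) vec set"
    and n :: nat and ks :: "nat \<Rightarrow> nat"
  assumes "N \<ge> 2"
    and "reduced_pres N R"
    and "side_confluent N R"
    and "\<forall>m \<ge> lN N n. \<forall>g\<in>Vpow m.
           alt (F1 N R n m) (F2 N R n m) (ks m) g = alt (F2 N R n m) (F1 N R n m) (ks m) g"
  shows "h' N R n ks ` {f \<in> TV. \<forall>w. f w \<noteq> 0 \<longrightarrow> lN N n \<le> length w}
           \<subseteq> tens (nf R ` TV) (J N R (n + 1))"
proof
  fix x assume "x \<in> h' N R n ks ` {f \<in> TV. \<forall>w. f w \<noteq> 0 \<longrightarrow> lN N n \<le> length w}"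
  then obtain f where x: "x = h' N R n ks f" by blast
  have N1: "N \<ge> 1" using assms(1) by simp
  show "x \<in> tens (nf R ` TV) (J N R (n + 1))" unfolding x h'_def
    unfolding tens_def
  proof (rule span_sum)
    fix m assume "m \<in> {m. lN N n \<le> m \<and> (\<exists>w. length w = m \<and> f w \<noteq> 0)}"
    then have "lN N n \<le> m" by simp
    then show "gamma1 N R n m (ks m) (deg_comp m f) \<in> lin_span {cmul a b |a b. a \<in> nf R ` TV \<and> b \<in> J N R (n + 1)}"
      using gamma_in[OF assms(2) N1 deg_comp_Vpow] unfolding tens_def by blast
  qed
qed

end
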